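(* Let $U,V\in\mathbb{R}^{3\times3}$ be symmetric positive definite with $U\neq V$, $UV=VU$, and $V=RUR^T$ for some $R\in SO(3)$. Suppose the eigenvalues of $U$ satisfy $\frac1{\sqrt2}<\lambda_1<\lambda_2=1<\lambda_3$, that $U$ and $V$ have a common eigenvector for the eigenvalue $1$, and that $$\lambda_3=\frac{\lambda_1}{\sqrt{2\lambda_1^2-1}}.$$ Then there exist rotations $R_u^{+},R_v^{+},R_u^{-},R_v^{-}\in SO(3)$, nonzero vectors $b^{+},b^{-}\in\mathbb{R}^3$ with $b^{+}\nparallel b^{-}$, and unit vectors $\hat m_u^{\pm},\hat m_v^{\pm}$ such that, for each sign, $$R_u^{\pm}U-I=b^{\pm}\otimes\hat m_u^{\pm},\qquad R_v^{\pm}V-I=b^{\pm}\otimes\hat m_v^{\pm},$$ and hence $R_u^{\pm}U-R_v^{\pm}V=b^{\pm}\otimes(\hat m_u^{\pm}-\hat m_v^{\pm})$. That is, $U$, $V$ and the identity (austenite) form two distinct planar triple clusters in which the three pairwise differences are rank-one with a common (parallel) shear vector.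
   Context: Here $I$ is the identity matrix (representing austenite) and $SO(3)$ the rotation group. *)

theory Defs
  imports "HOL-Analysis.Analysis"
begin

definition SO3 :: "(real^3^3) set" where
  "SO3 = {R. orthogonal_matrix R \<and> det R = 1}"

definition sym_posdef :: "real^3^3 \<Rightarrow> bool" where
  "sym_posdef A \<longleftrightarrow> transpose A = A \<and> (\<forall>x. x \<noteq> 0 \<longrightarrow> x \<bullet> (A *v x) > 0)"

definition eigenvalues3 :: "real^3^3 \<Rightarrow> real set" where
  "eigenvalues3 A = {l. \<exists>v. v \<noteq> 0 \<and> A *v v = l *\<^sub>R v}"

definition tensor :: "real^3 \<Rightarrow> real^3 \<Rightarrow> real^3^3" where
  "tensor a b = (\<chi> i j. a $ i * b $ j)"

definition parallel3 :: "real^3 \<Rightarrow> real^3 \<Rightarrow> bool" where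
  "parallel3 a b \<longleftrightarrow> (\<exists>c. a = c *\<^sub>R b) \<or> (\<exists>c. b = c *\<^sub>R a)"

end

theory Submission imports Defs begin


lemma mat3_eq: "(A::real^3^3) = B \<longleftrightarrow> (\<forall>i j. A$i$j = B$i$j)"
  by (simp add: vec_eq_iff)

lemma mmul3: "((A::real^3^3) ** B)$i$j = A$i$1*B$1$j + A$i$2*B$2$j + A$i$3*B$3$j"
  by (simp add: matrix_matrix_mult_def sum_3)

lemma mv3: "((A::real^3^3) *v x)$i = A$i$1*x$1 + A$i$2*x$2 + A$i$3*x$3"
  by (simp add: matrix_vector_mult_def sum_3)

lemma inner3: "(x::real^3) \<bullet> y = x$1*y$1 + x$2*y$2 + x$3*y$3"
  by (simp add: inner_vec_def sum_3)

definition dg :: "real \<Rightarrow> real \<Rightarrow> real \<Rightarrow> real^3^3" where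
  "dg a b c = vector [vector [a,0,0], vector [0,b,0], vector [0,0,c]]"

definition QU :: "real \<Rightarrow> real \<Rightarrow> real \<Rightarrow> real^3^3" where
  "QU p q k = (let s = (q+p)/(2*p*q); t = (q-p)/(2*p*q) in
     vector [vector [s,0,k*t], vector[0,1,0], vector[-k*t,0,s]])"
definition QV :: "real \<Rightarrow> real \<Rightarrow> real \<Rightarrow> real^3^3" where
  "QV p q k = (let s = (q+p)/(2*p*q); t = (q-p)/(2*p*q) in
     vector [vector [s,0,-k*t], vector[0,1,0], vector[k*t,0,s]])"
definition b0 :: "real \<Rightarrow> real \<Rightarrow> real \<Rightarrow> real^3" where
  "b0 p q k = vector [(q-p)/sqrt 2, 0, k*(q-p)/sqrt 2]"
definition mU :: "real \<Rightarrow> real \<Rightarrow> real \<Rightarrow> real^3" where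
  "mU p q k = vector [-1/(sqrt 2*q), 0, k/(sqrt 2*p)]"
definition mV :: "real \<Rightarrow> real \<Rightarrow> real \<Rightarrow> real^3" where
  "mV p q k = vector [1/(sqrt 2*p), 0, -k/(sqrt 2*q)]"

lemma forall3: "(\<forall>i::3. P i) \<longleftrightarrow> P 1 \<and> P 2 \<and> P 3" by (rule forall_3)

lemma rot_SO3:
  assumes "a^2 + b^2 = 1" "k*k = (1::real)"
  shows "vector [vector [a,0,k*b], vector[0,1,0], vector[-k*b,0,a]] \<in> SO3"
proof -
  have a: "a*a + k*(k*(b*b)) = 1" "a*a + b*b = 1" using assms by (simp_all add: power2_eq_square mult.assoc[symmetric])
  show ?thesis
    unfolding SO3_def orthogonal_matrix
    using a by (auto simp: mat3_eq forall3 mmul3 det_3 mat_def transpose_def algebra_simps)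
qed

lemma diag_case:
  assumes p: "p > 0" and q: "q > 0" and key: "p^2 + q^2 = 2*p^2*q^2" and k: "k*k = 1"
  shows "QU p q k \<in> SO3" "QV p q k \<in> SO3"
    "QU p q k ** dg p 1 q - mat 1 = tensor (b0 p q k) (mU p q k)"
    "QV p q k ** dg q 1 p - mat 1 = tensor (b0 p q k) (mV p q k)"
    "norm (mU p q k) = 1" "norm (mV p q k) = 1"
proof -
  have st: "((q+p)/(2*p*q))^2 + ((q-p)/(2*p*q))^2 = 1"
  proof -
    have "(q+p)^2 + (q-p)^2 = (2*p*q)^2" using key by (simp add: power2_eq_square algebra_simps)
    moreover have "(2*p*q)^2 \<noteq> 0" using p q by simp
    ultimately show ?thesis by (simp add: power_divide add_divide_distrib[symmetric])
  qed
  have s2: "sqrt 2 * sqrt 2 = (2::real)" by simp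
  have kk: "\<And>x. k*(k*x) = x" using k by (metis mult.assoc mult_1)
  show "QU p q k \<in> SO3"
    unfolding QU_def Let_def using rot_SO3[OF st k] by simp
  show "QV p q k \<in> SO3"
  proof -
    have k': "(-k)*(-k) = 1" using k by simp
    show ?thesis unfolding QV_def Let_def using rot_SO3[OF st k'] by simp
  qed
  show "QU p q k ** dg p 1 q - mat 1 = tensor (b0 p q k) (mU p q k)"
    using p q k by (auto simp: mat3_eq forall3 mmul3 QU_def dg_def Let_def mat_def tensor_def b0_def mU_def field_simps s2 kk)
  show "QV p q k ** dg q 1 p - mat 1 = tensor (b0 p q k) (mV p q k)"
    using p q k by (auto simp: mat3_eq forall3 mmul3 QV_def dg_def Let_def mat_def tensor_def b0_def mV_def field_simps s2 kk)
  show "norm (mU p q k) = 1"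
    using p q k key by (simp add: norm_eq_sqrt_inner inner3 mU_def field_simps power2_eq_square s2)
  show "norm (mV p q k) = 1"
    using p q k key by (simp add: norm_eq_sqrt_inner inner3 mV_def field_simps power2_eq_square s2)
qed

lemma tensor_conj: "(P::real^3^3) ** tensor b m ** transpose P = tensor (P *v b) (P *v m)"
  by (auto simp: mat3_eq forall3 mmul3 mv3 tensor_def transpose_def algebra_simps)

lemma tensor_diff: "tensor b m1 - tensor b m2 = tensor b (m1 - m2)"
  by (simp add: vec_eq_iff tensor_def algebra_simps)

lemma msub_l: "(A::real^3^3) ** (B - C) = A ** B - A ** C"
  by (simp add: vec_eq_iff matrix_matrix_mult_def sum_subtractf right_diff_distrib left_diff_distrib)
lemma msub_r: "((B::real^3^3) - C) ** A = B ** A - C ** A"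
  by (simp add: vec_eq_iff matrix_matrix_mult_def sum_subtractf right_diff_distrib left_diff_distrib)

lemma conj_SO3:
  assumes "orthogonal_matrix (P::real^3^3)" "Q \<in> SO3"
  shows "P ** Q ** transpose P \<in> SO3"
proof -
  have "det P * det P = 1" using det_orthogonal_matrix[OF assms(1)] by auto
  then show ?thesis using assms
    by (auto simp: SO3_def det_mul orthogonal_matrix_mul)
qed

lemma conj_eq:
  assumes "P ** transpose P = mat 1" "transpose P ** P = mat 1"
    "Q ** D - mat 1 = tensor b m"
  shows "((P::real^3^3) ** Q ** transpose P) ** (P ** D ** transpose P) - mat 1
         = tensor (P *v b) (P *v m)"
proof -
  have "(P ** Q ** transpose P) ** (P ** D ** transpose P) = P ** (Q ** D) ** transpose P"
    by (metis assms(2) matrix_mul_assoc matrix_mul_rid)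
  moreover have "mat 1 = P ** mat 1 ** transpose P" using assms(1) by simp
  moreover have "P ** (Q ** D - mat 1) ** transpose P = P ** (Q ** D) ** transpose P - P ** mat 1 ** transpose P"
    by (simp only: msub_l msub_r)
  ultimately have "((P::real^3^3) ** Q ** transpose P) ** (P ** D ** transpose P) - mat 1
     = P ** (Q ** D - mat 1) ** transpose P"
    by metis
  then show ?thesis using assms(3) tensor_conj by simp
qed

lemma norm_orth:
  assumes "orthogonal_matrix (P::real^3^3)"
  shows "norm (P *v x) = norm x"
proof -
  have "(P *v x) \<bullet> (P *v x) = x \<bullet> x"
  proof -
    have "(P *v x) \<bullet> (P *v x) = (x v* transpose P) \<bullet> (P *v x)" by simp
    also have "\<dots> = x \<bullet> (transpose P *v (P *v x))" by (rule dot_lmul_matrix)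
    also have "\<dots> = x \<bullet> x" using assms
      by (simp only: matrix_vector_mul_assoc orthogonal_matrix_def) simp
    finally show ?thesis .
  qed
  then show ?thesis by (simp add: norm_eq_sqrt_inner)
qed

lemma sym_orth:
  assumes "transpose (U::real^3^3) = U" "U *v x = a *\<^sub>R x" "U *v y = b *\<^sub>R y" "a \<noteq> b"
  shows "x \<bullet> y = 0"
proof -
  have "(U *v x) \<bullet> y = x \<bullet> (U *v y)"
  proof -
    have "U *v x = x v* transpose U" by simp
    then show ?thesis using assms(1) dot_lmul_matrix by metis
  qed
  then have "a * (x \<bullet> y) = b * (x \<bullet> y)" using assms by simp
  then show ?thesis using assms(4) by simp
qed



theorem mainTheorem3:
  fixes U V :: "real^3^3" and l1 l3 :: real
  assumes "sym_posdef U" and "sym_posdef V" and "U \<noteq> V"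
    and "U ** V = V ** U"
    and "\<exists>R \<in> SO3. V = R ** U ** transpose R"
    and "eigenvalues3 U = {l1, 1, l3}"
    and "1 / sqrt 2 < l1" and "l1 < 1" and "1 < l3"
    and "\<exists>e. e \<noteq> 0 \<and> U *v e = e \<and> V *v e = e"
    and "l3 = l1 / sqrt (2 * l1^2 - 1)"
  shows "\<exists>Rup Rvp Rum Rvm bp bm mup mvp mum mvm.
           Rup \<in> SO3 \<and> Rvp \<in> SO3 \<and> Rum \<in> SO3 \<and> Rvm \<in> SO3 \<and>
           bp \<noteq> 0 \<and> bm \<noteq> 0 \<and> \<not> parallel3 bp bm \<and>
           norm mup = 1 \<and> norm mvp = 1 \<and> norm mum = 1 \<and> norm mvm = 1 \<and>
           Rup ** U - mat 1 = tensor bp mup \<and> Rvp ** V - mat 1 = tensor bp mvp \<and>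
           Rum ** U - mat 1 = tensor bm mum \<and> Rvm ** V - mat 1 = tensor bm mvm \<and>
           Rup ** U - Rvp ** V = tensor bp (mup - mvp) \<and>
           Rum ** U - Rvm ** V = tensor bm (mum - mvm)"
proof -
  have sq2: "sqrt 2 > 0" by simp
  have l1pos: "0 < l1" using assms(7) sq2 by (smt (verit) divide_pos_pos)
  have "1 < sqrt 2 * l1" using assms(7) sq2 by (simp add: field_simps)
  then have "1 < (sqrt 2 * l1) * (sqrt 2 * l1)" by (simp add: less_1_mult)
  then have h2: "2*l1^2 - 1 > 0" by (simp add: power2_eq_square algebra_simps)
  have "l3^2 = l1^2/(2*l1^2-1)" using assms(11) h2 by (simp add: power_divide)
  then have key: "l1^2 + l3^2 = 2*l1^2*l3^2" using h2 by (simp add: field_simps)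
  have l3pos: "0 < l3" using assms(9) by simp
  have d12: "l1 \<noteq> 1" "l1 \<noteq> l3" "(1::real) \<noteq> l3" using assms(8,9) by auto
  have tU: "transpose U = U" using assms(1) by (simp add: sym_posdef_def)
  have "l1 \<in> eigenvalues3 U" using assms(6) by simp
  then obtain v1 where v1: "v1 \<noteq> 0" "U *v v1 = l1 *\<^sub>R v1" by (auto simp: eigenvalues3_def)
  have "1 \<in> eigenvalues3 U" using assms(6) by simp
  then obtain v2 where v2: "v2 \<noteq> 0" "U *v v2 = 1 *\<^sub>R v2" by (auto simp: eigenvalues3_def)
  have "l3 \<in> eigenvalues3 U" using assms(6) by simp
  then obtain v3 where v3: "v3 \<noteq> 0" "U *v v3 = l3 *\<^sub>R v3" by (auto simp: eigenvalues3_def)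
  define u1 where "u1 = (1/norm v1) *\<^sub>R v1"
  define u2 where "u2 = (1/norm v2) *\<^sub>R v2"
  define u3 where "u3 = (1/norm v3) *\<^sub>R v3"
  have e1: "U *v u1 = l1 *\<^sub>R u1" using v1 by (simp add: u1_def matrix_vector_mult_scaleR)
  have e2: "U *v u2 = 1 *\<^sub>R u2" using v2 by (simp add: u2_def matrix_vector_mult_scaleR)
  have e3: "U *v u3 = l3 *\<^sub>R u3" using v3 by (simp add: u3_def matrix_vector_mult_scaleR)
  have n1: "u1 \<bullet> u1 = 1" using v1 by (simp add: u1_def) (metis power2_eq_square power2_norm_eq_inner)
  have n2: "u2 \<bullet> u2 = 1" using v2 by (simp add: u2_def) (metis power2_eq_square power2_norm_eq_inner)
  have n3: "u3 \<bullet> u3 = 1" using v3 by (simp add: u3_def) (metis power2_eq_square power2_norm_eq_inner)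
  have o12: "u1 \<bullet> u2 = 0" by (rule sym_orth[OF tU e1 e2 d12(1)])
  have o13: "u1 \<bullet> u3 = 0" by (rule sym_orth[OF tU e1 e3 d12(2)])
  have o23: "u2 \<bullet> u3 = 0" by (rule sym_orth[OF tU e2 e3 d12(3)])
  have o21: "u2 \<bullet> u1 = 0" "u3 \<bullet> u1 = 0" "u3 \<bullet> u2 = 0" using o12 o13 o23 by (simp_all add: inner_commute)
  define P :: "real^3^3" where "P = (\<chi> i (j::3). (if j = 1 then u1 else if j = 2 then u2 else u3) $ i)"
  have Pe: "P$i$1 = u1$i" "P$i$2 = u2$i" "P$i$3 = u3$i" for i by (simp_all add: P_def)
  have PtP: "transpose P ** P = mat 1"
    using n1 n2 n3 o12 o13 o23 o21
    unfolding mat3_eq by (auto simp: forall3 mmul3 transpose_def Pe mat_def inner3)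
  have oP: "orthogonal_matrix P" using PtP by (simp add: orthogonal_matrix)
  have PPt: "P ** transpose P = mat 1" using oP by (simp add: orthogonal_matrix_def)
  define D where "D = dg l1 1 l3"
  define D' where "D' = dg l3 1 l1"
  have c1: "\<And>i. U$i$1*u1$1 + U$i$2*u1$2 + U$i$3*u1$3 = l1 * u1$i"
  proof -
    fix i have "(U *v u1)$i = l1 * u1$i" using e1 by simp
    then show "U$i$1*u1$1 + U$i$2*u1$2 + U$i$3*u1$3 = l1 * u1$i" by (simp only: mv3)
  qed
  have c2: "\<And>i. U$i$1*u2$1 + U$i$2*u2$2 + U$i$3*u2$3 = u2$i"
  proof -
    fix i have "(U *v u2)$i = u2$i" using e2 by simp
    then show "U$i$1*u2$1 + U$i$2*u2$2 + U$i$3*u2$3 = u2$i" by (simp only: mv3)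
  qed
  have c3: "\<And>i. U$i$1*u3$1 + U$i$2*u3$2 + U$i$3*u3$3 = l3 * u3$i"
  proof -
    fix i have "(U *v u3)$i = l3 * u3$i" using e3 by simp
    then show "U$i$1*u3$1 + U$i$2*u3$2 + U$i$3*u3$3 = l3 * u3$i" by (simp only: mv3)
  qed
  have UP: "U ** P = P ** D"
    unfolding mat3_eq by (simp add: forall3 mmul3 Pe D_def dg_def c1 c2 c3 mult.commute[of l1] mult.commute[of l3])
  have A1: "transpose P ** (P ** X) = X" for X :: "real^3^3"
    by (simp add: matrix_mul_assoc PtP)
  have A2: "P ** (transpose P ** X) = X" for X :: "real^3^3"
    by (simp add: matrix_mul_assoc PPt)
  have Ueq: "U = P ** D ** transpose P"
  proof -
    have "U = U ** (P ** transpose P)" by (simp add: PPt)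
    also have "\<dots> = P ** D ** transpose P" by (simp add: matrix_mul_assoc UP)
    finally show ?thesis .
  qed
  have Deq: "D = transpose P ** U ** P"
    by (simp add: Ueq matrix_mul_assoc[symmetric] A1 PtP)
  define V0 where "V0 = transpose P ** V ** P"
  have Veq: "V = P ** V0 ** transpose P"
    by (simp add: V0_def matrix_mul_assoc[symmetric] A2 PPt)
  have comm: "D ** V0 = V0 ** D"
  proof -
    have "D ** V0 = transpose P ** (U ** V) ** P"
      unfolding Deq V0_def by (simp add: matrix_mul_assoc[symmetric] A2)
    also have "\<dots> = transpose P ** (V ** U) ** P" using assms(4) by simp
    also have "\<dots> = V0 ** D"
      unfolding Deq V0_def by (simp add: matrix_mul_assoc[symmetric] A2)
    finally show ?thesis .
  qed
  have cm: "(D ** V0)$i$j = (V0 ** D)$i$j" for i j using comm by simp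
  have off: "V0$1$2 = 0" "V0$1$3 = 0" "V0$2$1 = 0" "V0$2$3 = 0" "V0$3$1 = 0" "V0$3$2 = 0"
    using cm[of 1 2] cm[of 1 3] cm[of 2 1] cm[of 2 3] cm[of 3 1] cm[of 3 2] d12
    by (auto simp: mmul3 D_def dg_def)
  obtain e where e: "e \<noteq> 0" "U *v e = e" "V *v e = e" using assms(10) by blast
  define e' where "e' = transpose P *v e"
  have B: "P *v (transpose P *v x) = x" for x
    by (simp add: matrix_vector_mul_assoc PPt del: transpose_matrix_vector)
  have "P *v e' = e" by (simp add: e'_def matrix_vector_mul_assoc PPt del: transpose_matrix_vector)
  then have e'nz: "e' \<noteq> 0" using e(1) by auto
  have De: "D *v e' = e'"
    using e(2) by (simp add: e'_def Deq matrix_vector_mul_assoc[symmetric] B del: transpose_matrix_vector)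
  have Ve: "V0 *v e' = e'"
    using e(3) by (simp add: e'_def V0_def matrix_vector_mul_assoc[symmetric] B del: transpose_matrix_vector)
  have "(D *v e')$1 = e'$1" "(D *v e')$3 = e'$3" using De by simp_all
  then have "l1 * e'$1 = e'$1" "l3 * e'$3 = e'$3" by (simp_all add: mv3 D_def dg_def)
  then have z13: "e'$1 = 0" "e'$3 = 0" using d12 by auto
  have nz2: "e'$2 \<noteq> 0" using e'nz z13 by (auto simp: vec_eq_iff forall3)
  have "(V0 *v e')$2 = e'$2" using Ve by simp
  then have "V0$2$2 * e'$2 = e'$2" by (simp add: mv3 z13)
  then have mu2: "V0$2$2 = 1" using nz2 by simp
  obtain R where R: "R \<in> SO3" "V = R ** U ** transpose R" using assms(5) by blast
  define W where "W = transpose P ** R ** P"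
  have oW: "orthogonal_matrix W" using R(1) oP
    by (simp add: W_def SO3_def orthogonal_matrix_mul)
  have tW: "transpose W = transpose P ** transpose R ** P"
    by (simp add: W_def matrix_transpose_mul matrix_mul_assoc)
  have V0W: "V0 = W ** D ** transpose W"
    unfolding tW by (simp add: V0_def W_def R(2) Ueq matrix_mul_assoc[symmetric] A2)
  have "det W * det W = 1" using det_orthogonal_matrix[OF oW] by auto
  then have detV0: "det V0 = det D" by (simp add: V0W det_mul)
  have "trace V0 = trace (D ** transpose W ** W)"
    by (simp add: V0W matrix_mul_assoc[symmetric] trace_mul_sym[of W])
  also have "\<dots> = trace D" using oW by (simp add: matrix_mul_assoc[symmetric] orthogonal_matrix_def)
  finally have trV0: "trace V0 = trace D" .
  have sum: "V0$1$1 + V0$3$3 = l1 + l3" using trV0 mu2 by (simp add: trace_def sum_3 D_def dg_def)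
  have prod: "V0$1$1 * V0$3$3 = l1 * l3" using detV0 mu2 off by (simp add: det_3 D_def dg_def)
  have "(V0$1$1 - l1) * (V0$1$1 - l3) = 0"
    using sum prod by (smt (verit) mult.commute right_diff_distrib left_diff_distrib)
  then have "V0$1$1 = l1 \<or> V0$1$1 = l3" by simp
  moreover have "V0$1$1 \<noteq> l1"
  proof
    assume h: "V0$1$1 = l1"
    then have "V0$3$3 = l3" using sum by simp
    then have "V0 = D" using h mu2 off unfolding mat3_eq by (simp add: forall3 D_def dg_def)
    then have "V = U" using Veq Ueq by simp
    then show False using assms(3) by simp
  qed
  ultimately have "V0$1$1 = l3" by simp
  then have "V0$3$3 = l1" using sum by simp
  then have "V0 = D'" using \<open>V0$1$1 = l3\<close> mu2 off unfolding mat3_eq by (simp add: forall3 D'_def dg_def)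
  then have VeqD: "V = P ** D' ** transpose P" using Veq by simp
  have DC: "QU l1 l3 k \<in> SO3" "QV l1 l3 k \<in> SO3"
    "QU l1 l3 k ** D - mat 1 = tensor (b0 l1 l3 k) (mU l1 l3 k)"
    "QV l1 l3 k ** D' - mat 1 = tensor (b0 l1 l3 k) (mV l1 l3 k)"
    "norm (mU l1 l3 k) = 1" "norm (mV l1 l3 k) = 1" if "k*k = 1" for k
    using diag_case[OF l1pos l3pos key that] by (simp_all add: D_def D'_def)
  have k1: "(1::real)*1 = 1" and k2: "(-1::real)*(-1) = 1" by simp_all
  define bp where "bp = P *v b0 l1 l3 1"
  define bm where "bm = P *v b0 l1 l3 (-1)"
  have inj: "x = y" if "P *v x = P *v y" for x y
    using that by (metis matrix_vector_mul_assoc PtP matrix_vector_mul_lid)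
  have sc: "P *v (c *\<^sub>R x) = c *\<^sub>R (P *v x)" for c x by (simp add: matrix_vector_mult_scaleR)
  have qp: "(l3 - l1) / sqrt 2 \<noteq> 0" using assms(8,9) by simp
  have bpnz: "bp \<noteq> 0"
  proof
    assume "bp = 0"
    then have "P *v b0 l1 l3 1 = P *v 0" by (simp add: bp_def)
    then have "b0 l1 l3 1 = 0" by (rule inj)
    then have "(b0 l1 l3 1)$1 = 0" by simp
    then show False using qp by (simp add: b0_def)
  qed
  have bmnz: "bm \<noteq> 0"
  proof
    assume "bm = 0"
    then have "P *v b0 l1 l3 (-1) = P *v 0" by (simp add: bm_def)
    then have "b0 l1 l3 (-1) = 0" by (rule inj)
    then have "(b0 l1 l3 (-1))$1 = 0" by simp
    then show False using qp by (simp add: b0_def)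
  qed
  have npar: "\<not> parallel3 bp bm"
  proof
    assume "parallel3 bp bm"
    then obtain c where "b0 l1 l3 1 = c *\<^sub>R b0 l1 l3 (-1) \<or> b0 l1 l3 (-1) = c *\<^sub>R b0 l1 l3 1"
      unfolding parallel3_def bp_def bm_def using inj sc by metis
    then have "((b0 l1 l3 1)$1 = c * (b0 l1 l3 (-1))$1 \<and> (b0 l1 l3 1)$3 = c * (b0 l1 l3 (-1))$3)
      \<or> ((b0 l1 l3 (-1))$1 = c * (b0 l1 l3 1)$1 \<and> (b0 l1 l3 (-1))$3 = c * (b0 l1 l3 1)$3)"
      by auto
    then show False using qp by (auto simp: b0_def)
  qed
  have X1: "(P ** QU l1 l3 k ** transpose P) ** U - mat 1 = tensor (P *v b0 l1 l3 k) (P *v mU l1 l3 k)"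
    if "k*k = 1" for k
    unfolding Ueq by (rule conj_eq[OF PPt PtP DC(3)[OF that]])
  have X2: "(P ** QV l1 l3 k ** transpose P) ** V - mat 1 = tensor (P *v b0 l1 l3 k) (P *v mV l1 l3 k)"
    if "k*k = 1" for k
    unfolding VeqD by (rule conj_eq[OF PPt PtP DC(4)[OF that]])
  have dif: "A - B = tensor b (m1 - m2)" if "A - mat 1 = tensor b m1" "B - mat 1 = tensor b m2"
    for A B :: "real^3^3" and b m1 m2
  proof -
    have "A - B = (A - mat 1) - (B - mat 1)" by simp
    then show ?thesis using that tensor_diff by simp
  qed
  show ?thesis
    apply (rule exI[of _ "P ** QU l1 l3 1 ** transpose P"])
    apply (rule exI[of _ "P ** QV l1 l3 1 ** transpose P"])
    apply (rule exI[of _ "P ** QU l1 l3 (-1) ** transpose P"])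
    apply (rule exI[of _ "P ** QV l1 l3 (-1) ** transpose P"])
    apply (rule exI[of _ bp], rule exI[of _ bm])
    apply (rule exI[of _ "P *v mU l1 l3 1"], rule exI[of _ "P *v mV l1 l3 1"])
    apply (rule exI[of _ "P *v mU l1 l3 (-1)"], rule exI[of _ "P *v mV l1 l3 (-1)"])
    using conj_SO3[OF oP DC(1)[OF k1]] conj_SO3[OF oP DC(2)[OF k1]]
      conj_SO3[OF oP DC(1)[OF k2]] conj_SO3[OF oP DC(2)[OF k2]]
      bpnz bmnz npar norm_orth[OF oP] DC(5,6)[OF k1] DC(5,6)[OF k2]
      X1[OF k1] X2[OF k1] X1[OF k2] X2[OF k2]
      dif[OF X1[OF k1] X2[OF k1]] dif[OF X1[OF k2] X2[OF k2]]
    unfolding bp_def bm_def by simp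
qed
end
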